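(* Let $s,k\geq 2$ and $n\geq ks+1$. For any reflection $\alpha$ of $[n]$, i.e., any permutation of $[n]$ of the form $x\mapsto c-x \pmod n$ for some fixed $c$ (residues modulo $n$ taken in $[n]$), the automorphism of $\operatorname{KG}(n,k)_{s-\operatorname{stab}}$ given by $\{i_1,\dots,i_k\}\mapsto\{\alpha(i_1),\dots,\alpha(i_k)\}$ is not a shift of $\operatorname{KG}(n,k)_{s-\operatorname{stab}}$.
   Context: For integers $s,k\geq 2$ and $n\geq ks$, a subset $S\subseteq[n]=\{1,\dots,n\}$ is $s$-stable if $s\leq |i-j|\leq n-s$ for all distinct $i,j\in S$. The $s$-stable Kneser graph $\operatorname{KG}(n,k)_{s-\operatorname{stab}}$ has as vertices the $s$-stable $k$-subsets of $[n]$, two vertices being adjacent iff they are disjoint. Every permutation of $[n]$ in the dihedral group $D_{2n}$ (symmetries of the $n$-cycle $1,2,\dots,n$) induces an automorphism of $\operatorname{KG}(n,k)_{s-\operatorname{stab}}$ by acting elementwise on vertices. A shift of a graph $G$ is an automorphism $\phi$ of $G$ such that $u$ and $\phi(u)$ are adjacent for every vertex $u$. *)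

theory Defs
  imports Main
begin

definition s_stable :: "nat \<Rightarrow> nat \<Rightarrow> nat set \<Rightarrow> bool" where
  "s_stable n s S \<longleftrightarrow> S \<subseteq> {1..n} \<and>
     (\<forall>i\<in>S. \<forall>j\<in>S. i \<noteq> j \<longrightarrow>
        int s \<le> \<bar>int i - int j\<bar> \<and> \<bar>int i - int j\<bar> \<le> int n - int s)"

definition stab_kneser_vertices :: "nat \<Rightarrow> nat \<Rightarrow> nat \<Rightarrow> nat set set" where
  "stab_kneser_vertices n k s = {S. s_stable n s S \<and> card S = k}"

definition stab_kneser_adj :: "nat \<Rightarrow> nat \<Rightarrow> nat \<Rightarrow> nat set \<Rightarrow> nat set \<Rightarrow> bool" where
  "stab_kneser_adj n k s u v \<longleftrightarrow>
     u \<in> stab_kneser_vertices n k s \<and> v \<in> stab_kneser_vertices n k s \<and> u \<inter> v = {}"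

definition graph_automorphism :: "'a set \<Rightarrow> ('a \<Rightarrow> 'a \<Rightarrow> bool) \<Rightarrow> ('a \<Rightarrow> 'a) \<Rightarrow> bool" where
  "graph_automorphism V E \<phi> \<longleftrightarrow> bij_betw \<phi> V V \<and>
     (\<forall>u\<in>V. \<forall>v\<in>V. E u v \<longleftrightarrow> E (\<phi> u) (\<phi> v))"

definition graph_shift :: "'a set \<Rightarrow> ('a \<Rightarrow> 'a \<Rightarrow> bool) \<Rightarrow> ('a \<Rightarrow> 'a) \<Rightarrow> bool" where
  "graph_shift V E \<phi> \<longleftrightarrow> graph_automorphism V E \<phi> \<and> (\<forall>u\<in>V. E u (\<phi> u))"

text \<open>The reflection x \<mapsto> c - x (mod n), residues taken in [n] = {1..n}.\<close>
definition reflection :: "nat \<Rightarrow> int \<Rightarrow> nat \<Rightarrow> nat" where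
  "reflection n c x = nat ((c - int x - 1) mod int n + 1)"

end

theory Submission
  imports Defs
begin

definition Dm :: "nat \<Rightarrow> nat \<Rightarrow> int \<Rightarrow> bool" where
  "Dm n s t \<longleftrightarrow> int s \<le> t mod int n \<and> t mod int n \<le> int n - int s"

lemma Dm_mod: "Dm n s (t mod int n) = Dm n s t"
  by (simp add: Dm_def)

lemma C_iff_D:
  fixes i j :: int
  assumes "1 \<le> i" "i \<le> int n" "1 \<le> j" "j \<le> int n" "s \<ge> 1"
  shows "(int s \<le> \<bar>i-j\<bar> \<and> \<bar>i-j\<bar> \<le> int n - int s) \<longleftrightarrow> Dm n s (i - j)"
proof (cases "i \<ge> j")
  case True
  then have "(i-j) mod int n = i - j" using assms by (intro mod_pos_pos_trivial) auto
  then show ?thesis using True by (simp add: Dm_def)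
next
  case False
  have "(i-j) mod int n = (i - j + int n) mod int n" by simp
  also have "\<dots> = i - j + int n" using assms False by (intro mod_pos_pos_trivial) auto
  finally show ?thesis using False by (auto simp: Dm_def)
qed

lemma abs_D:
  fixes t :: int
  assumes "int s \<le> \<bar>t\<bar>" "\<bar>t\<bar> \<le> int n - int s" "s \<ge> 1"
  shows "Dm n s t"
proof (cases "t \<ge> 0")
  case True
  then have "t mod int n = t" using assms by (intro mod_pos_pos_trivial) auto
  then show ?thesis using True assms by (simp add: Dm_def)
next
  case False
  have "t mod int n = (t + int n) mod int n" by simp
  also have "\<dots> = t + int n" using assms False by (intro mod_pos_pos_trivial) auto
  finally show ?thesis using False assms by (auto simp: Dm_def)
qed

lemma stable_iff:
  assumes "s \<ge> 1"
  shows "s_stable n s S \<longleftrightarrow> S \<subseteq> {1..n} \<and> (\<forall>i\<in>S. \<forall>j\<in>S. i \<noteq> j \<longrightarrow> Dm n s (int i - int j))"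
proof -
  have "\<And>i j. i \<in> {1..n} \<Longrightarrow> j \<in> {1..n} \<Longrightarrow>
     (int s \<le> \<bar>int i - int j\<bar> \<and> \<bar>int i - int j\<bar> \<le> int n - int s) \<longleftrightarrow> Dm n s (int i - int j)"
    using assms by (intro C_iff_D) auto
  then show ?thesis unfolding s_stable_def by (smt (verit, best) subset_iff) 
qed

lemma refl_int:
  assumes "n > 0"
  shows "int (reflection n c x) = (c - int x - 1) mod int n + 1"
  using assms by (simp add: reflection_def)

lemma refl_range:
  assumes "n > 0"
  shows "reflection n c x \<in> {1..n}"
proof -
  have "0 \<le> (c - int x - 1) mod int n" "(c - int x - 1) mod int n < int n" using assms by auto
  then show ?thesis using refl_int[OF assms, of c x] by auto
qed

lemma refl_invol:
  assumes "n > 0" "x \<in> {1..n}"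
  shows "reflection n c (reflection n c x) = x"
proof -
  have "int (reflection n c (reflection n c x)) = (c - ((c - int x - 1) mod int n + 1) - 1) mod int n + 1"
    using refl_int[OF assms(1)] by simp
  also have "(c - ((c - int x - 1) mod int n + 1) - 1) mod int n = (c - 2 - (c - int x - 1) mod int n) mod int n"
    by (simp add: algebra_simps)
  also have "\<dots> = (c - 2 - (c - int x - 1)) mod int n" by (simp add: mod_diff_right_eq)
  also have "\<dots> = (int x - 1) mod int n" by (simp add: algebra_simps)
  also have "\<dots> = int x - 1" using assms by (intro mod_pos_pos_trivial) auto
  finally show ?thesis by simp
qed

lemma refl_diff:
  assumes "n > 0"
  shows "(int (reflection n c i) - int (reflection n c j)) mod int n = (int j - int i) mod int n"
proof -
  have "(int (reflection n c i) - int (reflection n c j)) mod int n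
      = ((c - int i - 1) mod int n - (c - int j - 1) mod int n) mod int n"
    using refl_int[OF assms] by simp
  also have "\<dots> = ((c - int i - 1) - (c - int j - 1)) mod int n" by (simp add: mod_diff_eq)
  finally show ?thesis by (simp add: algebra_simps)
qed

lemma refl_inj:
  assumes "n > 0"
  shows "inj_on (reflection n c) {1..n}"
  by (metis assms inj_onI refl_invol)

lemma refl_vertex:
  assumes "n > 0" "s \<ge> 1" "u \<in> stab_kneser_vertices n k s"
  shows "reflection n c ` u \<in> stab_kneser_vertices n k s"
proof -
  have st: "s_stable n s u" and cu: "card u = k" using assms(3) by (auto simp: stab_kneser_vertices_def)
  have sub: "u \<subseteq> {1..n}" using st by (simp add: s_stable_def)
  have inj: "inj_on (reflection n c) u" using refl_inj[OF assms(1)] sub inj_on_subset by blast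
  have "card (reflection n c ` u) = k" using card_image[OF inj] cu by simp
  moreover have "s_stable n s (reflection n c ` u)"
    unfolding stable_iff[OF assms(2)]
  proof (intro conjI ballI impI)
    show "reflection n c ` u \<subseteq> {1..n}" using refl_range[OF assms(1)] by auto
  next
    fix x y assume x: "x \<in> reflection n c ` u" and y: "y \<in> reflection n c ` u" and xy: "x \<noteq> y"
    then obtain i j where i: "i \<in> u" "x = reflection n c i" and j: "j \<in> u" "y = reflection n c j" by auto
    have "i \<noteq> j" using xy i j by auto
    then have "Dm n s (int j - int i)" using st i j by (simp add: stable_iff[OF assms(2)])
    then show "Dm n s (int x - int y)" using refl_diff[OF assms(1), of c i j] i j
      by (metis Dm_mod)
  qed
  ultimately show ?thesis by (simp add: stab_kneser_vertices_def)
qed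

lemma refl_image_invol:
  assumes "n > 0" "u \<subseteq> {1..n}"
  shows "reflection n c ` (reflection n c ` u) = u"
proof -
  have "reflection n c ` (reflection n c ` u) = (\<lambda>x. reflection n c (reflection n c x)) ` u"
    by (simp add: image_image)
  also have "\<dots> = id ` u" using refl_invol[OF assms(1)] assms(2)
    by (intro image_cong) auto
  finally show ?thesis by simp
qed

lemma automorph:
  assumes "n > 0" "s \<ge> 1"
  shows "graph_automorphism (stab_kneser_vertices n k s) (stab_kneser_adj n k s)
           (\<lambda>u. reflection n c ` u)"
proof -
  let ?V = "stab_kneser_vertices n k s"
  have sub: "\<And>u. u \<in> ?V \<Longrightarrow> u \<subseteq> {1..n}"
    by (auto simp: stab_kneser_vertices_def s_stable_def)
  have inv: "\<And>u. u \<in> ?V \<Longrightarrow> reflection n c ` (reflection n c ` u) = u"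
    using refl_image_invol[OF assms(1)] sub by blast
  have bij: "bij_betw (\<lambda>u. reflection n c ` u) ?V ?V"
  proof (rule bij_betw_byWitness[where f'="\<lambda>u. reflection n c ` u"])
    show "\<forall>a\<in>?V. reflection n c ` (reflection n c ` a) = a" using inv by blast
    show "\<forall>a\<in>?V. reflection n c ` (reflection n c ` a) = a" using inv by blast
    show "(\<lambda>u. reflection n c ` u) ` ?V \<subseteq> ?V" using refl_vertex[OF assms] by blast
    show "(\<lambda>u. reflection n c ` u) ` ?V \<subseteq> ?V" using refl_vertex[OF assms] by blast
  qed
  have "\<forall>u\<in>?V. \<forall>v\<in>?V. stab_kneser_adj n k s u v \<longleftrightarrow>
          stab_kneser_adj n k s (reflection n c ` u) (reflection n c ` v)"
  proof (intro ballI)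
    fix u v assume u: "u \<in> ?V" and v: "v \<in> ?V"
    have "reflection n c ` (u \<inter> v) = reflection n c ` u \<inter> reflection n c ` v"
      using inj_on_image_Int[OF refl_inj[OF assms(1)] sub[OF u] sub[OF v]] .
    then show "stab_kneser_adj n k s u v \<longleftrightarrow>
          stab_kneser_adj n k s (reflection n c ` u) (reflection n c ` v)"
      using u v refl_vertex[OF assms u] refl_vertex[OF assms v]
      by (auto simp: stab_kneser_adj_def)
  qed
  with bij show ?thesis by (simp add: graph_automorphism_def)
qed

theorem mainTheorem8:
  fixes n k s :: nat and c :: int
  assumes "s \<ge> 2" and "k \<ge> 2" and "n \<ge> k * s + 1"
  shows "graph_automorphism (stab_kneser_vertices n k s) (stab_kneser_adj n k s)
           (\<lambda>u. reflection n c ` u)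
       \<and> \<not> graph_shift (stab_kneser_vertices n k s) (stab_kneser_adj n k s)
           (\<lambda>u. reflection n c ` u)"
proof -
  have n0: "n > 0" using assms by simp
  have s1: "s \<ge> 1" using assms by simp
  define d :: int where "d = (if odd s then int s else int s + 1)"
  have dodd: "odd d" unfolding d_def by auto
  have ds: "int s \<le> d" "d \<le> int s + 1" unfolding d_def by auto
  define t :: int where "t = (if even c then 0 else d)"
  have tev: "even (c - 2 - t)" unfolding t_def using dodd by auto
  define a :: int where "a = (c - 2 - t) div 2"
  have a2: "2 * a = c - 2 - t" unfolding a_def using tev by simp
  define B :: "int set" where "B = insert 0 ((\<lambda>j. d + int j * int s) ` {..<k-1})"
  define f :: "int \<Rightarrow> nat" where "f b = nat ((a + b) mod int n + 1)" for b
  define u where "u = f ` B"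
  have fint: "int (f b) = (a + b) mod int n + 1" for b
    unfolding f_def using n0 by simp
  have frange: "f b \<in> {1..n}" for b
  proof -
    have "0 \<le> (a + b) mod int n" "(a + b) mod int n < int n" using n0 by auto
    then show ?thesis using fint[of b] by auto
  qed
  have fdiff: "(int (f b) - int (f b')) mod int n = (b - b') mod int n" for b b'
  proof -
    have "(int (f b) - int (f b')) mod int n = ((a + b) mod int n - (a + b') mod int n) mod int n"
      using fint by simp
    also have "\<dots> = ((a + b) - (a + b')) mod int n" by (simp add: mod_diff_eq)
    finally show ?thesis by simp
  qed
  have Bd: "\<And>b b'. b \<in> B \<Longrightarrow> b' \<in> B \<Longrightarrow> b \<noteq> b' \<Longrightarrow> Dm n s (b - b')"
  proof -
    fix b b' assume b: "b \<in> B" and b': "b' \<in> B" and ne: "b \<noteq> b'"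
    have k1: "int (k - 1) = int k - 1" using assms by simp
    have "int (k * s + 1) \<le> int n" using assms(3) by (simp only: of_nat_le_iff)
    then have "int k * int s + 1 \<le> int n" by simp
    then have km: "int (k - 1) * int s + 1 \<le> int n - int s" unfolding k1 by (simp add: algebra_simps)
    have bnd: "\<And>x. x \<in> B \<Longrightarrow> 0 \<le> x \<and> x \<le> int (k - 1) * int s + 1"
    proof -
      fix x assume "x \<in> B"
      then consider "x = 0" | j where "j < k - 1" "x = d + int j * int s" unfolding B_def by auto
      then show "0 \<le> x \<and> x \<le> int (k - 1) * int s + 1"
      proof cases
        case 1 then show ?thesis by simp
      next
        case 2
        have "int j + 1 \<le> int (k - 1)" using 2 by simp
        then have "(int j + 1) * int s \<le> int (k - 1) * int s" by (simp add: mult_right_mono)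
        then show ?thesis using 2 ds by (simp add: algebra_simps)
      qed
    qed
    have sep: "int s \<le> \<bar>b - b'\<bar>"
    proof -
      have sep1: "int s \<le> \<bar>x - y\<bar>" if hx: "x \<in> B" "y \<in> B" "x \<noteq> y" "y = 0" for x y
      proof -
        obtain j where "x = d + int j * int s" using hx unfolding B_def by auto
        moreover have "0 \<le> int j * int s" by simp
        ultimately have "int s \<le> x" using ds by linarith
        then show ?thesis using hx(4) by simp
      qed
      show ?thesis
      proof (cases "b = 0 \<or> b' = 0")
        case True
        then show ?thesis using sep1[of b b'] sep1[of b' b] b b' ne by (auto simp: abs_minus_commute)
      next
        case False
        then obtain j j' where "b = d + int j * int s" "b' = d + int j' * int s"
          using b b' unfolding B_def by auto
        then have "b - b' = (int j - int j') * int s" "j \<noteq> j'" using ne by (auto simp: algebra_simps)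
        moreover have "1 \<le> \<bar>int j - int j'\<bar>" using \<open>j \<noteq> j'\<close> by auto
        ultimately show ?thesis by (simp add: abs_mult mult_right_mono[of 1 _ "int s", simplified])
      qed
    qed
    have "\<bar>b - b'\<bar> \<le> int n - int s" using bnd[OF b] bnd[OF b'] km by auto
    then show "Dm n s (b - b')" using abs_D sep s1 by blast
  qed
  have finj: "inj_on f B"
  proof (rule inj_onI)
    fix b b' assume b: "b \<in> B" and b': "b' \<in> B" and eq: "f b = f b'"
    show "b = b'"
    proof (rule ccontr)
      assume "b \<noteq> b'"
      then have "Dm n s (b - b')" using Bd b b' by blast
      then have "Dm n s (int (f b) - int (f b'))" by (metis Dm_mod fdiff)
      then show False using eq s1 by (simp add: Dm_def)
    qed
  qed
  have cB: "card B = k"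
  proof -
    have "0 \<notin> (\<lambda>j. d + int j * int s) ` {..<k-1}"
    proof
      assume "0 \<in> (\<lambda>j. d + int j * int s) ` {..<k-1}"
      then obtain j where "d + int j * int s = 0" by auto
      moreover have "0 \<le> int j * int s" by simp
      ultimately show False using ds s1 by linarith
    qed
    moreover have "inj_on (\<lambda>j. d + int j * int s) {..<k-1}" using s1 by (auto simp: inj_on_def)
    ultimately show ?thesis unfolding B_def using assms by (simp add: card_image)
  qed
  have uV: "u \<in> stab_kneser_vertices n k s"
  proof -
    have "card u = k" unfolding u_def using card_image[OF finj] cB by simp
    moreover have "s_stable n s u"
      unfolding stable_iff[OF s1]
    proof (intro conjI ballI impI)
      show "u \<subseteq> {1..n}" unfolding u_def using frange by auto
    next
      fix x y assume "x \<in> u" "y \<in> u" "x \<noteq> y"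
      then obtain b b' where "b \<in> B" "b' \<in> B" "x = f b" "y = f b'" "b \<noteq> b'" unfolding u_def by auto
      then show "Dm n s (int x - int y)" using Bd by (metis Dm_mod fdiff)
    qed
    ultimately show ?thesis by (simp add: stab_kneser_vertices_def)
  qed
  have zB: "0 \<in> B" unfolding B_def by simp
  have dB: "d \<in> B"
  proof -
    have "(0::nat) \<in> {..<k-1}" using assms(2) by simp
    then have "d + int 0 * int s \<in> (\<lambda>j. d + int j * int s) ` {..<k-1}" by (rule imageI)
    then show ?thesis unfolding B_def by simp
  qed
  have tB: "t \<in> B" unfolding t_def using zB dB by simp
  have "reflection n c (f t) = f 0"
  proof -
    have "int (reflection n c (f t)) = (c - ((a + t) mod int n + 1) - 1) mod int n + 1"
      using refl_int[OF n0] fint by simp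
    also have "(c - ((a + t) mod int n + 1) - 1) mod int n = (c - 2 - (a + t) mod int n) mod int n"
      by (simp add: algebra_simps)
    also have "\<dots> = (c - 2 - (a + t)) mod int n" by (simp add: mod_diff_right_eq)
    also have "c - 2 - (a + t) = a" using a2 by simp
    finally have "int (reflection n c (f t)) = int (f 0)" using fint[of 0] by simp
    then show ?thesis by simp
  qed
  moreover have "f t \<in> u" unfolding u_def using tB by (rule imageI)
  ultimately have "f 0 \<in> reflection n c ` u" by (metis imageI)
  moreover have "f 0 \<in> u" unfolding u_def using zB by (rule imageI)
  ultimately have "f 0 \<in> u \<inter> reflection n c ` u" by simp
  then have "\<not> stab_kneser_adj n k s u (reflection n c ` u)"
    by (auto simp: stab_kneser_adj_def)
  then show ?thesis using automorph[OF n0 s1] uV by (auto simp: graph_shift_def)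
qed

end
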